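(* Let $G$ be a discrete (not necessarily countable) amenable ICC group, and let $X$ be a finite symmetric subset of $G$. Then the set of super-switching elements for $X$ is infinite.
   Context: A group has the infinite conjugacy class property (ICC) if it is non-trivial and every non-identity element has an infinite conjugacy class. A subset $X\subseteq G$ is symmetric if $X=X^{-1}$. An element $g\in G$ is a super-switching element for $X$ if $X\cap\big(gXg\cup gXg^{-1}\cup g^{-1}Xg\cup g^{-1}Xg^{-1}\big)\subseteq\{e\}$. *)

theory Defs
  imports Complex_Main "HOL-Algebra.Group"
begin

definition amenable_group :: "('a, 'b) monoid_scheme \<Rightarrow> bool" where
  "amenable_group G \<longleftrightarrow> group G \<and>
     (\<exists>\<mu> :: 'a set \<Rightarrow> real.
        \<mu> (carrier G) = 1 \<and>
        (\<forall>A. A \<subseteq> carrier G \<longrightarrow> \<mu> A \<ge> 0) \<and>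
        (\<forall>A B. A \<subseteq> carrier G \<longrightarrow> B \<subseteq> carrier G \<longrightarrow> A \<inter> B = {}
               \<longrightarrow> \<mu> (A \<union> B) = \<mu> A + \<mu> B) \<and>
        (\<forall>g\<in>carrier G. \<forall>A. A \<subseteq> carrier G \<longrightarrow> \<mu> ((\<lambda>x. g \<otimes>\<^bsub>G\<^esub> x) ` A) = \<mu> A))"

definition ICC :: "('a, 'b) monoid_scheme \<Rightarrow> bool" where
  "ICC G \<longleftrightarrow> carrier G \<noteq> {\<one>\<^bsub>G\<^esub>} \<and>
     (\<forall>g\<in>carrier G. g \<noteq> \<one>\<^bsub>G\<^esub> \<longrightarrow>
        infinite {h \<otimes>\<^bsub>G\<^esub> g \<otimes>\<^bsub>G\<^esub> inv\<^bsub>G\<^esub> h | h. h \<in> carrier G})"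

definition symmetric_subset :: "('a, 'b) monoid_scheme \<Rightarrow> 'a set \<Rightarrow> bool" where
  "symmetric_subset G X \<longleftrightarrow> X = (\<lambda>x. inv\<^bsub>G\<^esub> x) ` X"

definition super_switching :: "('a, 'b) monoid_scheme \<Rightarrow> 'a set \<Rightarrow> 'a \<Rightarrow> bool" where
  "super_switching G X g \<longleftrightarrow>
     X \<inter> ((\<lambda>x. g \<otimes>\<^bsub>G\<^esub> x \<otimes>\<^bsub>G\<^esub> g) ` X
          \<union> (\<lambda>x. g \<otimes>\<^bsub>G\<^esub> x \<otimes>\<^bsub>G\<^esub> inv\<^bsub>G\<^esub> g) ` X
          \<union> (\<lambda>x. inv\<^bsub>G\<^esub> g \<otimes>\<^bsub>G\<^esub> x \<otimes>\<^bsub>G\<^esub> g) ` X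
          \<union> (\<lambda>x. inv\<^bsub>G\<^esub> g \<otimes>\<^bsub>G\<^esub> x \<otimes>\<^bsub>G\<^esub> inv\<^bsub>G\<^esub> g) ` X)
       \<subseteq> {\<one>\<^bsub>G\<^esub>}"

end

theory Submission
  imports Defs
begin

locale mgrp = group G for G (structure) +
  fixes m :: "'a set \<Rightarrow> real"
  assumes m_G: "m (carrier G) = 1"
    and m_nn: "A \<subseteq> carrier G \<Longrightarrow> m A \<ge> 0"
    and m_add: "A \<subseteq> carrier G \<Longrightarrow> B \<subseteq> carrier G \<Longrightarrow> A \<inter> B = {} \<Longrightarrow> m (A \<union> B) = m A + m B"
    and m_inv: "g \<in> carrier G \<Longrightarrow> A \<subseteq> carrier G \<Longrightarrow> m ((\<lambda>x. g \<otimes> x) ` A) = m A"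
    and icc: "\<And>g. g \<in> carrier G \<Longrightarrow> g \<noteq> \<one> \<Longrightarrow> infinite {h \<otimes> g \<otimes> inv h | h. h \<in> carrier G}"
    and inf_G: "infinite (carrier G)"
begin

lemma m_empty: "m {} = 0"
  using m_add[of "{}" "{}"] by simp

lemma m_mono: "A \<subseteq> B \<Longrightarrow> B \<subseteq> carrier G \<Longrightarrow> m A \<le> m B"
proof -
  assume a: "A \<subseteq> B" "B \<subseteq> carrier G"
  have e: "B = A \<union> (B - A)" using a by blast
  have s: "A \<subseteq> carrier G" "B - A \<subseteq> carrier G" "A \<inter> (B - A) = {}" using a by blast+
  have "m B = m A + m (B - A)" by (subst e, rule m_add[OF s])
  moreover have "m (B - A) \<ge> 0" by (rule m_nn[OF s(2)])
  ultimately show ?thesis by linarith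
qed

lemma m_union_le: "A \<subseteq> carrier G \<Longrightarrow> B \<subseteq> carrier G \<Longrightarrow> m (A \<union> B) \<le> m A + m B"
proof -
  assume a: "A \<subseteq> carrier G" "B \<subseteq> carrier G"
  have e: "A \<union> B = A \<union> (B - A)" by blast
  have s: "B - A \<subseteq> carrier G" "A \<inter> (B - A) = {}" using a by blast+
  have "m (A \<union> B) = m A + m (B - A)" by (subst e, rule m_add[OF a(1) s])
  moreover have "m (B - A) \<le> m B" by (rule m_mono[OF _ a(2)]) blast
  ultimately show ?thesis by linarith
qed

lemma m_union_ge: "A \<subseteq> carrier G \<Longrightarrow> B \<subseteq> carrier G \<Longrightarrow> m (A \<union> B) \<ge> m A + m B - m (A \<inter> B)"
proof -
  assume a: "A \<subseteq> carrier G" "B \<subseteq> carrier G"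
  have e: "A \<union> B = A \<union> (B - A)" by blast
  have s: "B - A \<subseteq> carrier G" "A \<inter> (B - A) = {}" using a by blast+
  have 1: "m (A \<union> B) = m A + m (B - A)" by (subst e, rule m_add[OF a(1) s])
  have e2: "B = (B - A) \<union> (A \<inter> B)" by blast
  have s2: "A \<inter> B \<subseteq> carrier G" "(B - A) \<inter> (A \<inter> B) = {}" using a by blast+
  have 2: "m B = m (B - A) + m (A \<inter> B)" by (subst e2, rule m_add[OF s(1) s2])
  from 1 2 show ?thesis by linarith
qed

lemma m_le1: "A \<subseteq> carrier G \<Longrightarrow> m A \<le> 1"
  using m_mono[of A "carrier G"] m_G by simp

lemma null_UN: "finite F \<Longrightarrow> (\<And>i. i \<in> F \<Longrightarrow> f i \<subseteq> carrier G \<and> m (f i) = 0) \<Longrightarrow> m (\<Union>i\<in>F. f i) = 0"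
proof (induction F rule: finite_induct)
  case empty thus ?case by (simp add: m_empty)
next
  case (insert i F)
  have s: "(\<Union>j\<in>F. f j) \<subseteq> carrier G" using insert by auto
  have fi: "f i \<subseteq> carrier G" "m (f i) = 0" using insert.prems by auto
  have IH: "m (\<Union>j\<in>F. f j) = 0" using insert.IH insert.prems by auto
  have e: "(\<Union>j\<in>insert i F. f j) = f i \<union> (\<Union>j\<in>F. f j)" by simp
  have "m (f i \<union> (\<Union>j\<in>F. f j)) \<le> m (f i) + m (\<Union>j\<in>F. f j)"
    by (rule m_union_le[OF fi(1) s])
  moreover have "m (f i \<union> (\<Union>j\<in>F. f j)) \<ge> 0" using m_nn s fi(1) by simp
  ultimately show ?case unfolding e using fi IH by linarith
qed

lemma L:
  assumes I: "infinite I" and t: "t ` I \<subseteq> carrier G" and A: "A \<subseteq> carrier G"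
    and disj: "\<And>i j. i \<in> I \<Longrightarrow> j \<in> I \<Longrightarrow> i \<noteq> j \<Longrightarrow>
       m ((\<lambda>x. t i \<otimes> x) ` A \<inter> (\<lambda>x. t j \<otimes> x) ` A) = 0"
  shows "m A = 0"
proof -
  define T where "T i = (\<lambda>x. t i \<otimes> x) ` A" for i
  have tI: "i \<in> I \<Longrightarrow> t i \<in> carrier G" for i using t by blast
  have TG: "i \<in> I \<Longrightarrow> T i \<subseteq> carrier G" for i
  proof -
    assume i: "i \<in> I"
    show "T i \<subseteq> carrier G" unfolding T_def using tI[OF i] A by blast
  qed
  have mT: "i \<in> I \<Longrightarrow> m (T i) = m A" for i unfolding T_def by (rule m_inv[OF tI A])
  have key: "finite F \<Longrightarrow> F \<subseteq> I \<Longrightarrow> m (\<Union>i\<in>F. T i) \<ge> real (card F) * m A" for F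
  proof (induction F rule: finite_induct)
    case empty thus ?case by (simp add: m_empty)
  next
    case (insert i F)
    have iI: "i \<in> I" and FI: "F \<subseteq> I" using insert.prems by blast+
    have IH: "m (\<Union>j\<in>F. T j) \<ge> real (card F) * m A" using insert.IH[OF FI] .
    have s: "(\<Union>j\<in>F. T j) \<subseteq> carrier G" using FI TG by blast
    have "T i \<inter> (\<Union>j\<in>F. T j) = (\<Union>j\<in>F. T i \<inter> T j)" by blast
    moreover have "m (\<Union>j\<in>F. T i \<inter> T j) = 0"
    proof (rule null_UN)
      show "finite F" using insert.hyps(1) .
    next
      fix j assume j: "j \<in> F"
      have ij: "i \<in> I" "j \<in> I" "i \<noteq> j" using insert.hyps(2) iI FI j by blast+
      have "T i \<subseteq> carrier G" using TG ij by blast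
      moreover have "m (T i \<inter> T j) = 0" using disj[OF ij] unfolding T_def .
      ultimately show "T i \<inter> T j \<subseteq> carrier G \<and> m (T i \<inter> T j) = 0" by blast
    qed
    ultimately have z: "m (T i \<inter> (\<Union>j\<in>F. T j)) = 0" by simp
    have ge: "m (T i \<union> (\<Union>j\<in>F. T j)) \<ge> m (T i) + m (\<Union>j\<in>F. T j) - m (T i \<inter> (\<Union>j\<in>F. T j))"
      by (rule m_union_ge[OF TG[OF iI] s])
    have e: "(\<Union>j\<in>insert i F. T j) = T i \<union> (\<Union>j\<in>F. T j)" by simp
    have c: "real (card (insert i F)) = real (card F) + 1" using insert.hyps by simp
    show ?case unfolding e c using ge z mT[OF iI] IH by (simp add: algebra_simps)
  qed
  have bound: "real n * m A \<le> 1" for n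
  proof -
    obtain F where F: "F \<subseteq> I" "finite F" "card F = n" using infinite_arbitrarily_large[OF I] by blast
    have "(\<Union>i\<in>F. T i) \<subseteq> carrier G" using F TG by blast
    hence "m (\<Union>i\<in>F. T i) \<le> 1" by (rule m_le1)
    thus ?thesis using key[OF F(2) F(1)] F(3) by simp
  qed
  show ?thesis
  proof (rule ccontr)
    assume ne: "m A \<noteq> 0"
    have "m A \<ge> 0" by (rule m_nn[OF A])
    hence p: "m A > 0" using ne by simp
    obtain n where "1 < real n * m A" using ex_less_of_nat_mult[OF p] by blast
    thus False using bound[of n] by simp
  qed
qed

lemma g1: "a \<in> carrier G \<Longrightarrow> c \<in> carrier G \<Longrightarrow> x \<in> carrier G \<Longrightarrow> (a \<otimes> c) \<otimes> x \<otimes> inv (a \<otimes> c) = a \<otimes> (c \<otimes> x \<otimes> inv c) \<otimes> inv a"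
  by (simp add: inv_mult_group m_assoc)
lemma g2: "a \<in> carrier G \<Longrightarrow> x \<in> carrier G \<Longrightarrow> inv a \<otimes> (a \<otimes> x \<otimes> inv a) \<otimes> inv (inv a) = x"
  by (metis inv_closed inv_solve_left' inv_solve_right' m_assoc m_closed inv_inv)
lemma g3: "a \<in> carrier G \<Longrightarrow> r \<in> carrier G \<Longrightarrow> a \<otimes> r \<otimes> a \<otimes> r = r \<otimes> r \<Longrightarrow> r \<otimes> a \<otimes> inv r = inv a"
  by (metis inv_closed inv_solve_left' inv_solve_right' m_assoc m_closed)
lemma g4: "i \<in> carrier G \<Longrightarrow> j \<in> carrier G \<Longrightarrow> r \<in> carrier G \<Longrightarrow> r' \<in> carrier G \<Longrightarrow> i \<otimes> r = j \<otimes> r' \<Longrightarrow> r = inv i \<otimes> j \<otimes> r'"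
  by (metis inv_closed inv_solve_left' m_assoc m_closed)

lemma C_null:
  assumes x: "x \<in> carrier G" "x \<noteq> \<one>"
  shows "m {g \<in> carrier G. g \<otimes> x \<otimes> inv g = x} = 0"
proof -
  define C where "C = {g \<in> carrier G. g \<otimes> x \<otimes> inv g = x}"
  define Cl where "Cl = {h \<otimes> x \<otimes> inv h | h. h \<in> carrier G}"
  define t where "t w = (SOME h. h \<in> carrier G \<and> w = h \<otimes> x \<otimes> inv h)" for w
  have tw: "w \<in> Cl \<Longrightarrow> t w \<in> carrier G \<and> w = t w \<otimes> x \<otimes> inv (t w)" for w
    unfolding t_def Cl_def by (rule someI_ex) blast
  have "m C = 0"
  proof (rule L[of Cl t])
    show "infinite Cl" using icc x Cl_def by simp
    show "t ` Cl \<subseteq> carrier G" using tw by auto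
    show "C \<subseteq> carrier G" by (auto simp: C_def)
  next
    fix w w' assume w: "w \<in> Cl" "w' \<in> Cl" "w \<noteq> w'"
    have "(\<lambda>c. t w \<otimes> c) ` C \<inter> (\<lambda>c. t w' \<otimes> c) ` C = {}"
    proof (rule ccontr)
      assume "(\<lambda>c. t w \<otimes> c) ` C \<inter> (\<lambda>c. t w' \<otimes> c) ` C \<noteq> {}"
      then obtain c c' where cc: "c \<in> C" "c' \<in> C" "t w \<otimes> c = t w' \<otimes> c'" by blast
      have "(t w \<otimes> c) \<otimes> x \<otimes> inv (t w \<otimes> c) = w"
        using g1[of "t w" c x] tw[OF w(1)] cc x by (simp add: C_def)
      moreover have "(t w' \<otimes> c') \<otimes> x \<otimes> inv (t w' \<otimes> c') = w'"
        using g1[of "t w'" c' x] tw[OF w(2)] cc x by (simp add: C_def)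
      ultimately show False using cc w by simp
    qed
    thus "m ((\<lambda>c. t w \<otimes> c) ` C \<inter> (\<lambda>c. t w' \<otimes> c) ` C) = 0" by (simp add: m_empty)
  qed
  thus ?thesis by (simp add: C_def)
qed

lemma E_null:
  assumes x: "x \<in> carrier G" "x \<noteq> \<one>"
  shows "m {g \<in> carrier G. g \<otimes> x \<otimes> inv g = y} = 0"
proof (cases "{g \<in> carrier G. g \<otimes> x \<otimes> inv g = y} = {}")
  case True show ?thesis by (subst True) (rule m_empty)
next
  case False
  then obtain g0 where g0: "g0 \<in> carrier G" "g0 \<otimes> x \<otimes> inv g0 = y" by blast
  define C where "C = {g \<in> carrier G. g \<otimes> x \<otimes> inv g = x}"
  have sub: "{g \<in> carrier G. g \<otimes> x \<otimes> inv g = y} \<subseteq> (\<lambda>c. g0 \<otimes> c) ` C"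
  proof
    fix g assume g: "g \<in> {g \<in> carrier G. g \<otimes> x \<otimes> inv g = y}"
    have gG: "g \<in> carrier G" using g by simp
    have "(inv g0 \<otimes> g) \<otimes> x \<otimes> inv (inv g0 \<otimes> g) = inv g0 \<otimes> (g \<otimes> x \<otimes> inv g) \<otimes> inv (inv g0)"
      using g1[of "inv g0" g x] g0 gG x by simp
    also have "\<dots> = x" using g g0 g2[of g0 x] x by simp
    finally have "inv g0 \<otimes> g \<in> C" using gG g0 by (simp add: C_def)
    moreover have "g = g0 \<otimes> (inv g0 \<otimes> g)" using gG g0 by (simp add: m_assoc[symmetric])
    ultimately show "g \<in> (\<lambda>c. g0 \<otimes> c) ` C" by blast
  qed
  have CG: "C \<subseteq> carrier G" by (auto simp: C_def)
  have "m ((\<lambda>c. g0 \<otimes> c) ` C) = 0" using m_inv[OF g0(1) CG] C_null[OF x] by (simp add: C_def)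
  moreover have "(\<lambda>c. g0 \<otimes> c) ` C \<subseteq> carrier G" using CG g0 by auto
  ultimately show ?thesis using m_mono[OF sub] m_nn[of "{g \<in> carrier G. g \<otimes> x \<otimes> inv g = y}"]
    by fastforce
qed

lemma R_null: "m {g \<in> carrier G. g \<otimes> g = z} = 0"
proof (rule L[of "carrier G" id])
  show "infinite (carrier G)" by (rule inf_G)
  show "id ` carrier G \<subseteq> carrier G" by simp
  show "{g \<in> carrier G. g \<otimes> g = z} \<subseteq> carrier G" by auto
next
  fix i j assume ij: "i \<in> carrier G" "j \<in> carrier G" "i \<noteq> j"
  define R where "R = {g \<in> carrier G. g \<otimes> g = z}"
  define a where "a = inv i \<otimes> j"
  have aG: "a \<in> carrier G" using ij by (simp add: a_def)
  have a1: "a \<noteq> \<one>"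
  proof
    assume "a = \<one>"
    hence "i \<otimes> a = i" using ij by simp
    moreover have "i \<otimes> a = j" using ij by (simp add: a_def m_assoc[symmetric])
    ultimately show False using ij by simp
  qed
  define E where "E = {g \<in> carrier G. g \<otimes> a \<otimes> inv g = inv a}"
  have sub: "(\<lambda>x. id i \<otimes> x) ` R \<inter> (\<lambda>x. id j \<otimes> x) ` R \<subseteq> (\<lambda>x. j \<otimes> x) ` E"
  proof
    fix u assume "u \<in> (\<lambda>x. id i \<otimes> x) ` R \<inter> (\<lambda>x. id j \<otimes> x) ` R"
    then obtain r r' where rr: "r \<in> R" "r' \<in> R" "u = i \<otimes> r" "u = j \<otimes> r'" by auto
    have rG: "r \<in> carrier G" "r' \<in> carrier G" using rr by (auto simp: R_def)
    have "r = a \<otimes> r'" using g4[of i j r r'] rr rG ij by (simp add: a_def)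
    hence "a \<otimes> r' \<otimes> a \<otimes> r' = r' \<otimes> r'" using rr rG aG by (simp add: R_def m_assoc)
    hence "r' \<in> E" using g3[OF aG rG(2)] rG by (simp add: E_def)
    thus "u \<in> (\<lambda>x. j \<otimes> x) ` E" unfolding rr(4) by (rule imageI)
  qed
  have EG: "E \<subseteq> carrier G" by (auto simp: E_def)
  have "m ((\<lambda>x. j \<otimes> x) ` E) = 0" using m_inv[OF ij(2) EG] E_null[OF aG a1] by (simp add: E_def)
  moreover have jE: "(\<lambda>x. j \<otimes> x) ` E \<subseteq> carrier G" using EG ij by auto
  ultimately have le: "m ((\<lambda>x. id i \<otimes> x) ` R \<inter> (\<lambda>x. id j \<otimes> x) ` R) \<le> 0"
    using m_mono[OF sub jE] by simp
  have "(\<lambda>x. id i \<otimes> x) ` R \<inter> (\<lambda>x. id j \<otimes> x) ` R \<subseteq> carrier G" using ij by (auto simp: R_def)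
  hence "m ((\<lambda>x. id i \<otimes> x) ` R \<inter> (\<lambda>x. id j \<otimes> x) ` R) = 0" using le m_nn by (meson order.antisym)
  thus "m ((\<lambda>x. id i \<otimes> x) ` {g \<in> carrier G. g \<otimes> g = z} \<inter> (\<lambda>x. id j \<otimes> x) ` {g \<in> carrier G. g \<otimes> g = z}) = 0"
    by (simp only: R_def)
qed

lemma S_null:
  assumes w: "w \<in> carrier G"
  shows "m {g \<in> carrier G. g \<otimes> w \<otimes> g = z} = 0"
proof -
  define S where "S = {g \<in> carrier G. g \<otimes> w \<otimes> g = z}"
  have SG: "S \<subseteq> carrier G" by (auto simp: S_def)
  have sub: "(\<lambda>x. w \<otimes> x) ` S \<subseteq> {g \<in> carrier G. g \<otimes> g = w \<otimes> z}"
    using w by (auto simp: S_def m_assoc)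
  have "m ((\<lambda>x. w \<otimes> x) ` S) = 0"
    using m_mono[OF sub] R_null m_nn[of "(\<lambda>x. w \<otimes> x) ` S"] SG w by fastforce
  thus ?thesis using m_inv[OF w SG] by (simp add: S_def)
qed

lemma finite_null: "finite A \<Longrightarrow> A \<subseteq> carrier G \<Longrightarrow> m A = 0"
proof -
  assume A: "finite A" "A \<subseteq> carrier G"
  have e: "m {\<one>} = 0"
  proof (rule L[of "carrier G" id])
    fix i j assume "i \<in> carrier G" "j \<in> carrier G" "i \<noteq> j"
    hence "(\<lambda>x. id i \<otimes> x) ` {\<one>} \<inter> (\<lambda>x. id j \<otimes> x) ` {\<one>} = {}" by simp
    thus "m ((\<lambda>x. id i \<otimes> x) ` {\<one>} \<inter> (\<lambda>x. id j \<otimes> x) ` {\<one>}) = 0" by (simp only: m_empty)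
  qed (use inf_G in auto)
  have "g \<in> carrier G \<Longrightarrow> m {g} = 0" for g
    using m_inv[of g "{\<one>}"] e by simp
  hence "m (\<Union>g\<in>A. {g}) = 0" using A by (intro null_UN) auto
  thus ?thesis by simp
qed


lemma h1: "g \<in> carrier G \<Longrightarrow> w \<in> carrier G \<Longrightarrow> u = inv g \<otimes> w \<otimes> g \<Longrightarrow> g \<otimes> u \<otimes> inv g = w"
  by (metis inv_closed inv_solve_left' inv_solve_right' m_assoc m_closed)
lemma h2: "g \<in> carrier G \<Longrightarrow> w \<in> carrier G \<Longrightarrow> u = inv g \<otimes> w \<otimes> inv g \<Longrightarrow> g \<otimes> u \<otimes> g = w"
  by (metis inv_closed inv_solve_left' inv_solve_right' m_assoc m_closed)

lemma null_Un: "A \<subseteq> carrier G \<Longrightarrow> B \<subseteq> carrier G \<Longrightarrow> m A = 0 \<Longrightarrow> m B = 0 \<Longrightarrow> m (A \<union> B) = 0"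
  using m_union_le[of A B] m_nn[of "A \<union> B"] by auto

lemma main:
  assumes X: "X \<subseteq> carrier G" "finite X"
  shows "infinite {g \<in> carrier G. super_switching G X g}"
proof
  assume fin: "finite {g \<in> carrier G. super_switching G X g}"
  define B where "B x w = {g \<in> carrier G. g \<otimes> w \<otimes> g = x} \<union> {g \<in> carrier G. g \<otimes> x \<otimes> g = w}
     \<union> ((if w \<noteq> \<one> then {g \<in> carrier G. g \<otimes> w \<otimes> inv g = x} else {})
     \<union> (if x \<noteq> \<one> then {g \<in> carrier G. g \<otimes> x \<otimes> inv g = w} else {}))" for x w
  define Bad where "Bad = (\<Union>p\<in>X \<times> X. B (fst p) (snd p))"
  have BG: "B x w \<subseteq> carrier G" for x w by (auto simp: B_def)
  have Bn: "x \<in> X \<Longrightarrow> w \<in> X \<Longrightarrow> m (B x w) = 0" for x w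
  proof -
    assume xw: "x \<in> X" "w \<in> X"
    have G: "x \<in> carrier G" "w \<in> carrier G" using xw X by auto
    have s1: "m {g \<in> carrier G. g \<otimes> w \<otimes> g = x} = 0" by (rule S_null[OF G(2)])
    have s2: "m {g \<in> carrier G. g \<otimes> x \<otimes> g = w} = 0" by (rule S_null[OF G(1)])
    have s3: "m (if w \<noteq> \<one> then {g \<in> carrier G. g \<otimes> w \<otimes> inv g = x} else {}) = 0"
      using E_null[OF G(2)] m_empty by simp
    have s4: "m (if x \<noteq> \<one> then {g \<in> carrier G. g \<otimes> x \<otimes> inv g = w} else {}) = 0"
      using E_null[OF G(1)] m_empty by simp
    show ?thesis unfolding B_def
      by (intro null_Un s1 s2 s3 s4) auto
  qed
  have mBad: "m Bad = 0" unfolding Bad_def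
    using X Bn BG by (intro null_UN) auto
  have BadG: "Bad \<subseteq> carrier G" using BG by (auto simp: Bad_def)
  have "carrier G = Bad \<union> (carrier G - Bad)" using BadG by blast
  hence "m (carrier G) = m Bad + m (carrier G - Bad)" using m_add[of Bad "carrier G - Bad"] BadG by auto
  hence m1: "m (carrier G - Bad) = 1" using mBad m_G by simp
  have sub: "carrier G - Bad \<subseteq> {g \<in> carrier G. super_switching G X g}"
  proof
    fix g assume g: "g \<in> carrier G - Bad"
    have gG: "g \<in> carrier G" using g by simp
    show "g \<in> {g \<in> carrier G. super_switching G X g}"
    proof (rule ccontr)
      assume "g \<notin> {g \<in> carrier G. super_switching G X g}"
      hence ns: "\<not> super_switching G X g" using gG by simp
      obtain u where u: "u \<in> X" "u \<noteq> \<one>" "u \<in> (\<lambda>x. g \<otimes> x \<otimes> g) ` X \<union> (\<lambda>x. g \<otimes> x \<otimes> inv g) ` X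
          \<union> (\<lambda>x. inv g \<otimes> x \<otimes> g) ` X \<union> (\<lambda>x. inv g \<otimes> x \<otimes> inv g) ` X"
        using ns unfolding super_switching_def by blast
      obtain w where w: "w \<in> X"
        "u = g \<otimes> w \<otimes> g \<or> u = g \<otimes> w \<otimes> inv g \<or> u = inv g \<otimes> w \<otimes> g \<or> u = inv g \<otimes> w \<otimes> inv g"
        using u(3) by (elim UnE imageE) blast+
      have uw: "u \<in> X" "w \<in> X" "u \<noteq> \<one>"
        "u = g \<otimes> w \<otimes> g \<or> u = g \<otimes> w \<otimes> inv g \<or> u = inv g \<otimes> w \<otimes> g \<or> u = inv g \<otimes> w \<otimes> inv g"
        using u w by auto
      have uG: "u \<in> carrier G" "w \<in> carrier G" using uw X by auto
      have "g \<in> B u w"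
        using uw(4)
      proof (elim disjE)
        assume "u = g \<otimes> w \<otimes> g" hence "g \<in> {g \<in> carrier G. g \<otimes> w \<otimes> g = u}" using gG by simp
        thus ?thesis unfolding B_def by (rule UnI1[OF UnI1])
      next
        assume a: "u = g \<otimes> w \<otimes> inv g"
        have "w \<noteq> \<one>" using a uw(3) gG by auto
        moreover have "g \<in> {g \<in> carrier G. g \<otimes> w \<otimes> inv g = u}" using gG a by simp
        ultimately show ?thesis unfolding B_def by simp
      next
        assume "u = inv g \<otimes> w \<otimes> g"
        hence "g \<in> {g \<in> carrier G. g \<otimes> u \<otimes> inv g = w}" using h1[OF gG uG(2)] gG by simp
        thus ?thesis using uw(3) unfolding B_def by simp
      next
        assume "u = inv g \<otimes> w \<otimes> inv g"
        hence "g \<in> {g \<in> carrier G. g \<otimes> u \<otimes> g = w}" using h2[OF gG uG(2)] gG by simp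
        thus ?thesis unfolding B_def by (rule UnI1[OF UnI2])
      qed
      hence "g \<in> Bad" unfolding Bad_def using uw(1,2) by (intro UN_I[of "(u, w)"]) auto
      thus False using g by simp
    qed
  qed
  have "finite (carrier G - Bad)" using finite_subset[OF sub fin] .
  hence "m (carrier G - Bad) = 0" using finite_null by blast
  thus False using m1 by simp
qed

end

theorem proposition2p4:
  fixes G :: "('a, 'b) monoid_scheme" and X :: "'a set"
  assumes "group G"
    and "amenable_group G"
    and "ICC G"
    and "X \<subseteq> carrier G"
    and "finite X"
    and "symmetric_subset G X"
  shows "infinite {g \<in> carrier G. super_switching G X g}"
proof -
  interpret group G by fact
  have "\<exists>\<mu> :: 'a set \<Rightarrow> real. \<mu> (carrier G) = 1 \<and>
        (\<forall>A. A \<subseteq> carrier G \<longrightarrow> \<mu> A \<ge> 0) \<and>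
        (\<forall>A B. A \<subseteq> carrier G \<longrightarrow> B \<subseteq> carrier G \<longrightarrow> A \<inter> B = {}
               \<longrightarrow> \<mu> (A \<union> B) = \<mu> A + \<mu> B) \<and>
        (\<forall>g\<in>carrier G. \<forall>A. A \<subseteq> carrier G \<longrightarrow> \<mu> ((\<lambda>x. g \<otimes>\<^bsub>G\<^esub> x) ` A) = \<mu> A)"
    using assms(2) unfolding amenable_group_def by (rule conjunct2)
  then obtain \<mu> :: "'a set \<Rightarrow> real" where mu: "\<mu> (carrier G) = 1 \<and>
        (\<forall>A. A \<subseteq> carrier G \<longrightarrow> \<mu> A \<ge> 0) \<and>
        (\<forall>A B. A \<subseteq> carrier G \<longrightarrow> B \<subseteq> carrier G \<longrightarrow> A \<inter> B = {}
               \<longrightarrow> \<mu> (A \<union> B) = \<mu> A + \<mu> B) \<and>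
        (\<forall>g\<in>carrier G. \<forall>A. A \<subseteq> carrier G \<longrightarrow> \<mu> ((\<lambda>x. g \<otimes>\<^bsub>G\<^esub> x) ` A) = \<mu> A)"
    by (elim exE)
  have icc0: "carrier G \<noteq> {\<one>\<^bsub>G\<^esub>}" "\<forall>g\<in>carrier G. g \<noteq> \<one>\<^bsub>G\<^esub> \<longrightarrow> infinite {h \<otimes>\<^bsub>G\<^esub> g \<otimes>\<^bsub>G\<^esub> inv\<^bsub>G\<^esub> h | h. h \<in> carrier G}"
    using assms(3) unfolding ICC_def by (rule conjunct1, rule conjunct2)
  have icc: "\<And>g. g \<in> carrier G \<Longrightarrow> g \<noteq> \<one>\<^bsub>G\<^esub> \<Longrightarrow> infinite {h \<otimes>\<^bsub>G\<^esub> g \<otimes>\<^bsub>G\<^esub> inv\<^bsub>G\<^esub> h | h. h \<in> carrier G}"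
    using icc0(2) by blast
  obtain g where g: "g \<in> carrier G" "g \<noteq> \<one>\<^bsub>G\<^esub>"
    using icc0(1) one_closed by blast
  have "{h \<otimes>\<^bsub>G\<^esub> g \<otimes>\<^bsub>G\<^esub> inv\<^bsub>G\<^esub> h | h. h \<in> carrier G} \<subseteq> carrier G"
    using g by auto
  hence inf: "infinite (carrier G)" using icc[OF g] finite_subset by blast
  interpret mgrp G \<mu>
  proof
    show "\<mu> (carrier G) = 1" using mu by blast
  next
    show "\<And>A. A \<subseteq> carrier G \<Longrightarrow> 0 \<le> \<mu> A" using mu by blast
  next
    show "\<And>A B. A \<subseteq> carrier G \<Longrightarrow> B \<subseteq> carrier G \<Longrightarrow> A \<inter> B = {} \<Longrightarrow> \<mu> (A \<union> B) = \<mu> A + \<mu> B"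
      using mu by blast
  next
    show "\<And>g A. g \<in> carrier G \<Longrightarrow> A \<subseteq> carrier G \<Longrightarrow> \<mu> ((\<lambda>x. g \<otimes>\<^bsub>G\<^esub> x) ` A) = \<mu> A"
      using mu by blast
  qed (use icc inf in auto)
  show ?thesis using main assms(4,5) by blast
qed

end
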